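(* Let $f(X)=N(N-1)\sum_{i=1}^{\ell}\beta_i\,t(H_i,X)$ be a subgraph-counting function and let $m_i=|E(H_i)|$. Then for all $X,Y\in[0,1]^n$, $$\|\nabla f(X)-\nabla f(Y)\|_1\le\sum_{i=1}^{\ell}|\beta_i|\,m_i(m_i-1)\,\|X-Y\|_1.$$
   Context: $n=\binom N2$; $X\in[0,1]^n$ is identified with a symmetric $N\times N$ matrix with zero diagonal, entries indexed by unordered pairs. For a finite simple graph $H$ on $[m]$, $t(H,X)=\frac{1}{N(N-1)\cdots(N-m+1)}\sum_q\prod_{\{l,l'\}\in E(H)}X_{q_lq_{l'}}$ over injective $q:[m]\to[N]$. For an index $e$, $\partial_ef(X)=\frac12(f(X^{e\leftarrow1})-f(X^{e\leftarrow0}))$, $\nabla f(X)=(\partial_ef(X))_e\in\mathbb R^n$. $\|\cdot\|_1$ is the $\ell^1$ norm on $\mathbb R^n$. *)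

theory Defs
  imports "HOL-Analysis.Analysis"
begin

text \<open>Index set of unordered pairs of distinct vertices in [N] = {0..<N}; it has N choose 2 elements.
  A point X of [0,1]^n is a function on these pairs (values elsewhere are irrelevant).\<close>
definition pairs :: "nat \<Rightarrow> nat set set" where
  "pairs N = {{i, j} | i j. i < N \<and> j < N \<and> i \<noteq> j}"

text \<open>A finite simple graph H on [m] = {0..<m} is given by m and an edge set E \<subseteq> pairs m.\<close>
definition hom_density :: "nat \<Rightarrow> nat set set \<Rightarrow> nat \<Rightarrow> (nat set \<Rightarrow> real) \<Rightarrow> real" where
  "hom_density m E N X =
     (\<Sum>q\<in>{q. q \<in> {0..<m} \<rightarrow>\<^sub>E {0..<N} \<and> inj_on q {0..<m}}. \<Prod>e\<in>E. X (q ` e))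
       / (\<Prod>k<m. real (N - k))"

definition dpartial :: "((nat set \<Rightarrow> real) \<Rightarrow> real) \<Rightarrow> nat set \<Rightarrow> (nat set \<Rightarrow> real) \<Rightarrow> real" where
  "dpartial f e X = (f (X(e := 1)) - f (X(e := 0))) / 2"

definition l1norm :: "nat \<Rightarrow> (nat set \<Rightarrow> real) \<Rightarrow> real" where
  "l1norm N v = (\<Sum>e\<in>pairs N. \<bar>v e\<bar>)"

end

theory Submission
  imports Defs
begin


definition injs :: "nat \<Rightarrow> nat \<Rightarrow> (nat \<Rightarrow> nat) set" where
  "injs m N = {q. q \<in> {0..<m} \<rightarrow>\<^sub>E {0..<N} \<and> inj_on q {0..<m}}"

lemma finite_pairs: "finite (pairs N)"
proof -
  have "pairs N \<subseteq> Pow {0..<N}" by (auto simp: pairs_def)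
  then show ?thesis by (rule finite_subset) auto
qed

lemma finite_injs: "finite (injs m N)"
  by (rule finite_subset[of _ "{0..<m} \<rightarrow>\<^sub>E {0..<N}"]) (auto simp: injs_def intro!: finite_PiE)

lemma img_pairs: assumes "q \<in> injs m N" "a \<in> pairs m" shows "q ` a \<in> pairs N"
proof -
  from assms(2) obtain i j where a: "a = {i,j}" "i < m" "j < m" "i \<noteq> j" by (auto simp: pairs_def)
  from assms(1) have "inj_on q {0..<m}" "\<And>k. k < m \<Longrightarrow> q k < N" by (auto simp: injs_def PiE_def Pi_def)
  with a have "q i \<noteq> q j" "q i < N" "q j < N" by (auto simp: inj_on_def)
  then show ?thesis using a by (auto simp: pairs_def)
qed

lemma pairs_sub: "a \<in> pairs m \<Longrightarrow> a \<subseteq> {0..<m}" by (auto simp: pairs_def)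

lemma lemA:
  fixes Z :: "nat set \<Rightarrow> real"
  assumes q: "inj_on q {0..<m}" and E: "E \<subseteq> pairs m" and fin: "finite E"
  shows "(\<Prod>b\<in>E. (Z(e:=1)) (q ` b)) - (\<Prod>b\<in>E. (Z(e:=0)) (q ` b))
       = (\<Sum>a\<in>{a\<in>E. q ` a = e}. \<Prod>b\<in>E-{a}. Z (q ` b))"
proof (cases "\<exists>a\<in>E. q ` a = e")
  case True
  then obtain a where a: "a \<in> E" "q ` a = e" by blast
  have uniq: "b = a" if "b \<in> E" "q ` b = e" for b
  proof -
    have "b \<subseteq> {0..<m}" "a \<subseteq> {0..<m}" using that a E pairs_sub by blast+
    with q that a show ?thesis by (metis inj_on_image_eq_iff)
  qed
  have S: "{a\<in>E. q ` a = e} = {a}" using a uniq by blast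
  have eq: "(\<Prod>b\<in>E-{a}. (Z(e:=c)) (q ` b)) = (\<Prod>b\<in>E-{a}. Z (q ` b))" for c
    by (rule prod.cong) (use uniq in auto)
  have P: "(\<Prod>b\<in>E. (Z(e:=c)) (q ` b)) = c * (\<Prod>b\<in>E-{a}. Z (q ` b))" for c
    using prod.remove[OF fin a(1), of "\<lambda>b. (Z(e:=c)) (q ` b)"] eq a by simp
  show ?thesis unfolding P S by simp
next
  case False
  then have S: "{a\<in>E. q ` a = e} = {}" by blast
  have "(\<Prod>b\<in>E. (Z(e:=c)) (q ` b)) = (\<Prod>b\<in>E. Z (q ` b))" for c
    by (rule prod.cong) (use False in auto)
  then show ?thesis unfolding S by simp
qed

lemma lemB:
  assumes "finite F" "\<forall>b\<in>F. 0 \<le> x b \<and> x b \<le> 1 \<and> 0 \<le> y b \<and> y b \<le> (1::real)"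
  shows "\<bar>(\<Prod>b\<in>F. x b) - (\<Prod>b\<in>F. y b)\<bar> \<le> (\<Sum>b\<in>F. \<bar>x b - y b\<bar>)"
  using assms
proof (induction F rule: finite_induct)
  case empty then show ?case by simp
next
  case (insert a F)
  let ?X = "\<Prod>b\<in>F. x b" and ?Y = "\<Prod>b\<in>F. y b"
  have X01: "0 \<le> ?X" "?X \<le> 1" using insert by (auto intro: prod_nonneg prod_le_1)
  have ya: "0 \<le> y a" "y a \<le> 1" using insert by auto
  have IH: "\<bar>?X - ?Y\<bar> \<le> (\<Sum>b\<in>F. \<bar>x b - y b\<bar>)" using insert by auto
  have "x a * ?X - y a * ?Y = (x a - y a) * ?X + y a * (?X - ?Y)" by (simp add: algebra_simps)
  then have "\<bar>x a * ?X - y a * ?Y\<bar> \<le> \<bar>x a - y a\<bar> * ?X + y a * \<bar>?X - ?Y\<bar>"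
    using X01 ya by (simp add: abs_mult abs_triangle_ineq[THEN order_trans])
  also have "\<dots> \<le> \<bar>x a - y a\<bar> * 1 + 1 * (\<Sum>b\<in>F. \<bar>x b - y b\<bar>)"
    by (intro add_mono mult_mono) (use X01 ya IH in auto)
  finally show ?case using insert by simp
qed



lemma injs_iff: "q \<in> injs m N \<longleftrightarrow> inj_on q {0..<m} \<and> (\<forall>z<m. q z < N) \<and> (\<forall>z. m \<le> z \<longrightarrow> q z = undefined)"
  unfolding injs_def PiE_def Pi_def extensional_def by auto

lemma G_iff: "g \<in> {g \<in> A \<rightarrow>\<^sub>E C. inj_on g A} \<longleftrightarrow> inj_on g A \<and> (\<forall>z\<in>A. g z \<in> C) \<and> (\<forall>z. z \<notin> A \<longrightarrow> g z = undefined)"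
  unfolding PiE_def Pi_def extensional_def by auto

lemma card_Oij:
  assumes xy: "x < m" "y < m" "x \<noteq> y" and ij: "i < N" "j < N" "i \<noteq> j"
  shows "card {q\<in>injs m N. q x = i \<and> q y = j} = prod ((-) (N-2)) {0..<m-2}"
proof -
  define A where "A = {0..<m} - {x,y}"
  define C where "C = {0..<N} - {i,j}"
  define G where "G = {g \<in> A \<rightarrow>\<^sub>E C. inj_on g A}"
  have cA: "card A = m - 2" using xy unfolding A_def by (simp add: card_Diff_subset)
  have cC: "card C = N - 2" using ij unfolding C_def by (simp add: card_Diff_subset)
  have cG: "card G = prod ((-) (N-2)) {0..<m-2}"
    using card_inj_on_subset_funcset[of A C A] cA cC unfolding G_def A_def C_def by simp
  have bij: "bij_betw (\<lambda>q. restrict q A) {q\<in>injs m N. q x = i \<and> q y = j} G"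
  proof (rule bij_betw_byWitness[where f'="\<lambda>g. g(x:=i, y:=j)"])
    show "\<forall>q\<in>{q\<in>injs m N. q x = i \<and> q y = j}. (restrict q A)(x:=i, y:=j) = q"
    proof
      fix q assume q: "q \<in> {q\<in>injs m N. q x = i \<and> q y = j}"
      then have ext: "\<And>z. m \<le> z \<Longrightarrow> q z = undefined" and qx: "q x = i" "q y = j"
        by (simp_all add: injs_iff)
      show "(restrict q A)(x:=i, y:=j) = q"
      proof
        fix z show "((restrict q A)(x:=i, y:=j)) z = q z"
        proof (cases "z = x \<or> z = y")
          case True then show ?thesis using qx by auto
        next
          case False
          then show ?thesis using ext[of z] by (simp add: A_def)
        qed
      qed
    qed
    show "\<forall>g\<in>G. restrict (g(x:=i, y:=j)) A = g"
    proof
      fix g assume g: "g \<in> G"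
      then have ext: "\<And>z. z \<notin> A \<Longrightarrow> g z = undefined" unfolding G_def G_iff by simp
      show "restrict (g(x:=i, y:=j)) A = g"
      proof
        fix z show "restrict (g(x:=i, y:=j)) A z = g z"
          using ext[of z] by (simp add: A_def)
      qed
    qed
    show "(\<lambda>q. restrict q A) ` {q\<in>injs m N. q x = i \<and> q y = j} \<subseteq> G"
    proof
      fix g assume "g \<in> (\<lambda>q. restrict q A) ` {q\<in>injs m N. q x = i \<and> q y = j}"
      then obtain q where q: "q \<in> injs m N" "q x = i" "q y = j" and g: "g = restrict q A" by blast
      have inj: "inj_on q {0..<m}" and rng: "\<And>z. z < m \<Longrightarrow> q z < N"
        using q(1) by (simp_all add: injs_iff)
      have C: "q z \<in> C" if "z \<in> A" for z
      proof -
        have z: "z < m" "z \<noteq> x" "z \<noteq> y" using that by (simp_all add: A_def)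
        then have "q z \<noteq> q x" "q z \<noteq> q y" using inj xy by (metis atLeastLessThan_iff inj_on_eq_iff zero_le)+
        then show ?thesis using rng[OF z(1)] q(2,3) by (simp add: C_def)
      qed
      have "inj_on q A" using inj by (rule inj_on_subset) (simp add: A_def)
      then have "inj_on g A" unfolding g by simp
      then show "g \<in> G" unfolding G_def G_iff using C by (simp add: g)
    qed
    show "(\<lambda>g. g(x:=i, y:=j)) ` G \<subseteq> {q\<in>injs m N. q x = i \<and> q y = j}"
    proof
      fix q assume "q \<in> (\<lambda>g. g(x:=i, y:=j)) ` G"
      then obtain g where g: "g \<in> G" and q: "q = g(x:=i, y:=j)" by blast
      have gi: "inj_on g A" and gA: "\<And>z. z \<in> A \<Longrightarrow> g z \<in> C" and gE: "\<And>z. z \<notin> A \<Longrightarrow> g z = undefined"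
        using g unfolding G_def G_iff by simp_all
      have rng: "\<forall>z<m. q z < N"
      proof (intro allI impI)
        fix z assume z: "z < m"
        show "q z < N"
        proof (cases "z = x \<or> z = y")
          case True then show ?thesis using ij by (auto simp: q)
        next
          case False
          then have "z \<in> A" using z by (simp add: A_def)
          then show ?thesis using gA[of z] False by (simp add: q C_def)
        qed
      qed
      have ext: "\<forall>z. m \<le> z \<longrightarrow> q z = undefined"
        using gE xy by (simp add: q A_def)
      have "inj_on q {0..<m}"
      proof (rule inj_onI)
        fix a b assume ab: "a \<in> {0..<m}" "b \<in> {0..<m}" "q a = q b"
        show "a = b"
        proof (cases "a \<in> A \<and> b \<in> A")
          case True
          then have "g a = g b" using ab(3) by (simp add: q A_def)
          then show ?thesis using gi True by (simp add: inj_on_def)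
        next
          case False
          have xA: "x \<notin> A" "y \<notin> A" by (simp_all add: A_def)
          have qa: "a \<notin> A \<Longrightarrow> a = x \<or> a = y" "b \<notin> A \<Longrightarrow> b = x \<or> b = y"
            using ab by (auto simp: A_def)
          have qx: "q x = i" "q y = j" using xy by (simp_all add: q)
          have nA: "q z \<noteq> i" "q z \<noteq> j" if "z \<in> A" for z
            using gA[of z] xA that by (auto simp: q C_def)
          show ?thesis
          proof (cases "a \<in> A")
            case True
            then have "b = x \<or> b = y" using False qa by blast
            then show ?thesis using nA[OF True] ab(3) qx by auto
          next
            case aA: False
            then have a: "a = x \<or> a = y" using qa by blast
            show ?thesis
            proof (cases "b \<in> A")
              case True
              then show ?thesis using nA[OF True] ab(3) qx a by auto
            next
              case False
              then have "b = x \<or> b = y" using qa by blast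
              then show ?thesis using a ab(3) qx ij by auto
            qed
          qed
        qed
      qed
      then show "q \<in> {q\<in>injs m N. q x = i \<and> q y = j}" using xy rng ext by (simp add: injs_iff q)
    qed
  qed
  then show ?thesis using cG by (simp add: bij_betw_same_card)
qed



lemma fiber_card:
  assumes xy: "x < m" "y < m" "x \<noteq> y" and e: "e \<in> pairs N"
  shows "card {q\<in>injs m N. q ` {x,y} = e} = 2 * prod ((-) (N-2)) {0..<m-2}"
proof -
  from e obtain i j where ij: "e = {i,j}" "i < N" "j < N" "i \<noteq> j" by (auto simp: pairs_def)
  have eq: "{q\<in>injs m N. q ` {x,y} = e} = {q\<in>injs m N. q x = i \<and> q y = j} \<union> {q\<in>injs m N. q x = j \<and> q y = i}"
  proof (intro set_eqI iffI)
    fix q assume "q \<in> {q\<in>injs m N. q ` {x,y} = e}"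
    then have q: "q \<in> injs m N" "{q x, q y} = {i, j}" using ij by auto
    then show "q \<in> {q\<in>injs m N. q x = i \<and> q y = j} \<union> {q\<in>injs m N. q x = j \<and> q y = i}"
      by (auto simp: doubleton_eq_iff)
  next
    fix q assume "q \<in> {q\<in>injs m N. q x = i \<and> q y = j} \<union> {q\<in>injs m N. q x = j \<and> q y = i}"
    then show "q \<in> {q\<in>injs m N. q ` {x,y} = e}" using ij by auto
  qed
  have fin: "finite {q\<in>injs m N. q x = a \<and> q y = c}" for a c
    by (rule finite_subset[OF _ finite_injs]) auto
  have "card {q\<in>injs m N. q ` {x,y} = e} = card {q\<in>injs m N. q x = i \<and> q y = j} + card {q\<in>injs m N. q x = j \<and> q y = i}"
    unfolding eq by (rule card_Un_disjoint[OF fin fin]) (use ij in auto)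
  also have "\<dots> = 2 * prod ((-) (N-2)) {0..<m-2}"
    using card_Oij[OF xy ij(2,3,4)] card_Oij[OF xy ij(3,2) ij(4)[symmetric]] by simp
  finally show ?thesis .
qed

lemma prod_split2:
  assumes "2 \<le> m" "m \<le> (N::nat)"
  shows "(\<Prod>k<m. real (N-k)) = real N * (real N - 1) * real (prod ((-) (N-2)) {0..<m-2})"
proof -
  obtain m' where m: "m = Suc (Suc m')" using assms(1) by (metis add_2_eq_Suc le_Suc_ex)
  have A: "(\<Prod>k<m. real (N-k)) = real (\<Prod>k\<in>{0..<m}. N-k)"
    by (simp only: of_nat_prod lessThan_atLeast0)
  have B: "(\<Prod>k\<in>{0..<Suc (Suc m')}. N-k) = (N - 0) * ((N - Suc 0) * (\<Prod>i\<in>{0..<m'}. N - Suc (Suc i)))"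
    by (simp only: prod.atLeast0_lessThan_Suc_shift o_def)
  have C: "(\<Prod>i\<in>{0..<m'}. N - Suc (Suc i)) = prod ((-) (N-2)) {0..<m-2}"
    unfolding m by (rule prod.cong) auto
  have D: "real (N - Suc 0) = real N - 1" using assms by simp
  have "(\<Prod>k<m. real (N-k)) = real ((N - 0) * ((N - Suc 0) * prod ((-) (N-2)) {0..<m-2}))"
    unfolding A using B C by (simp only: m)
  also have "\<dots> = real N * (real N - 1) * real (prod ((-) (N-2)) {0..<m-2})"
    by (simp only: of_nat_mult D diff_zero mult.assoc)
  finally show ?thesis .
qed

lemma count_pairs:
  fixes h :: "nat set \<Rightarrow> real"
  assumes b: "b \<in> pairs m" and mN: "m \<le> N"
  shows "real N * (real N - 1) * (\<Sum>q\<in>injs m N. h (q ` b)) = 2 * (\<Prod>k<m. real (N-k)) * (\<Sum>e\<in>pairs N. h e)"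
proof -
  from b obtain x y where xy: "b = {x,y}" "x < m" "y < m" "x \<noteq> y" by (auto simp: pairs_def)
  define K where "K = prod ((-) (N-2)) {0..<m-2}"
  have "(\<Sum>q\<in>injs m N. h (q ` b)) = (\<Sum>e\<in>pairs N. \<Sum>q\<in>{q\<in>injs m N. q ` b = e}. h (q ` b))"
    by (rule sum.group[symmetric]) (use finite_injs finite_pairs img_pairs b in auto)
  also have "\<dots> = (\<Sum>e\<in>pairs N. real (2*K) * h e)"
  proof (rule sum.cong[OF refl])
    fix e assume e: "e \<in> pairs N"
    have "(\<Sum>q\<in>{q\<in>injs m N. q ` b = e}. h (q ` b)) = (\<Sum>q\<in>{q\<in>injs m N. q ` b = e}. h e)"
      by (rule sum.cong) auto
    also have "\<dots> = real (card {q\<in>injs m N. q ` b = e}) * h e" by simp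
    finally show "(\<Sum>q\<in>{q\<in>injs m N. q ` b = e}. h (q ` b)) = real (2*K) * h e"
      using fiber_card[OF xy(2,3,4) e] by (simp add: xy K_def)
  qed
  also have "\<dots> = real (2*K) * (\<Sum>e\<in>pairs N. h e)" by (simp add: sum_distrib_left)
  finally have S: "(\<Sum>q\<in>injs m N. h (q ` b)) = real (2*K) * (\<Sum>e\<in>pairs N. h e)" .
  have "2 \<le> m" using xy by linarith
  then have P: "(\<Prod>k<m. real (N-k)) = real N * (real N - 1) * real K"
    using prod_split2 mN unfolding K_def by blast
  show ?thesis unfolding S P by simp
qed



lemma hd_eq: "hom_density m E N Z = (\<Sum>q\<in>injs m N. \<Prod>b\<in>E. Z (q ` b)) / (\<Prod>k<m. real (N-k))"
  unfolding hom_density_def injs_def by simp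

lemma injs_empty: assumes "N < m" shows "injs m N = {}"
proof (rule ccontr)
  assume "injs m N \<noteq> {}"
  then obtain q where q: "q \<in> injs m N" by blast
  then have "q \<in> {0..<m} \<rightarrow> {0..<N}" "inj_on q {0..<m}" by (auto simp: injs_def PiE_def)
  then have "card {0..<m} \<le> card {0..<N}" by (intro card_inj) auto
  then show False using assms by simp
qed

lemma l1_nonneg: "0 \<le> l1norm N v" unfolding l1norm_def by (rule sum_nonneg) auto

lemma cc_nonneg: "0 \<le> real c * (real c - 1)"
  by (cases c) auto

lemma dp_eq:
  fixes Z :: "nat set \<Rightarrow> real"
  assumes E: "E \<subseteq> pairs m" and fin: "finite E"
  shows "dpartial (hom_density m E N) e Z =
    (\<Sum>q\<in>injs m N. \<Sum>a\<in>{a\<in>E. q ` a = e}. \<Prod>b\<in>E-{a}. Z (q ` b)) / (2 * (\<Prod>k<m. real (N-k)))"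
proof -
  have "dpartial (hom_density m E N) e Z =
     ((\<Sum>q\<in>injs m N. \<Prod>b\<in>E. (Z(e:=1)) (q ` b)) - (\<Sum>q\<in>injs m N. \<Prod>b\<in>E. (Z(e:=0)) (q ` b)))
       / (2 * (\<Prod>k<m. real (N-k)))"
    unfolding dpartial_def hd_eq by (simp add: diff_divide_distrib)
  also have "(\<Sum>q\<in>injs m N. \<Prod>b\<in>E. (Z(e:=1)) (q ` b)) - (\<Sum>q\<in>injs m N. \<Prod>b\<in>E. (Z(e:=0)) (q ` b))
     = (\<Sum>q\<in>injs m N. \<Sum>a\<in>{a\<in>E. q ` a = e}. \<Prod>b\<in>E-{a}. Z (q ` b))"
    unfolding sum_subtractf[symmetric]
    by (rule sum.cong[OF refl], rule lemA[OF _ E fin]) (simp add: injs_def)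
  finally show ?thesis .
qed

lemma key:
  fixes X Y :: "nat set \<Rightarrow> real"
  assumes E: "E \<subseteq> pairs m"
    and X01: "\<forall>e\<in>pairs N. 0 \<le> X e \<and> X e \<le> 1"
    and Y01: "\<forall>e\<in>pairs N. 0 \<le> Y e \<and> Y e \<le> 1"
  shows "real N * (real N - 1) * (\<Sum>e\<in>pairs N. \<bar>dpartial (hom_density m E N) e X - dpartial (hom_density m E N) e Y\<bar>)
    \<le> real (card E) * (real (card E) - 1) * l1norm N (\<lambda>e. X e - Y e)"
proof (cases "N < m")
  case True
  then have "\<And>Z. hom_density m E N Z = 0" by (simp add: hd_eq injs_empty)
  then have "\<And>e Z. dpartial (hom_density m E N) e Z = 0" by (simp add: dpartial_def)
  then show ?thesis using cc_nonneg l1_nonneg by (simp add: mult_nonneg_nonneg)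
next
  case False
  then have mN: "m \<le> N" by simp
  have fin: "finite E" using E finite_pairs by (rule finite_subset)
  define P where "P = (\<Prod>k<m. real (N-k))"
  have P: "0 < P" unfolding P_def using mN by (intro prod_pos) auto
  define T where "T = (\<lambda>q a (Z::nat set \<Rightarrow> real). \<Prod>b\<in>E-{a}. Z (q ` b))"
  define D where "D = (\<lambda>e. X e - Y e)"
  define W where "W = real N * (real N - 1)"
  have W: "0 \<le> W" unfolding W_def using cc_nonneg[of N] .
  have dp: "dpartial (hom_density m E N) e Z = (\<Sum>q\<in>injs m N. \<Sum>a\<in>{a\<in>E. q ` a = e}. T q a Z) / (2 * P)" for e Z
    unfolding T_def P_def by (rule dp_eq[OF E fin])
  have "(\<Sum>e\<in>pairs N. \<bar>dpartial (hom_density m E N) e X - dpartial (hom_density m E N) e Y\<bar>)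
      = (\<Sum>e\<in>pairs N. \<bar>\<Sum>q\<in>injs m N. \<Sum>a\<in>{a\<in>E. q ` a = e}. T q a X - T q a Y\<bar>) / (2 * P)"
    unfolding dp sum_divide_distrib[symmetric] diff_divide_distrib[symmetric] sum_subtractf
    using P by (simp add: abs_divide sum_divide_distrib)
  also have "\<dots> \<le> (\<Sum>e\<in>pairs N. \<Sum>q\<in>injs m N. \<Sum>a\<in>{a\<in>E. q ` a = e}. \<bar>T q a X - T q a Y\<bar>) / (2 * P)"
    using P by (intro divide_right_mono sum_mono order_trans[OF sum_abs] ) auto
  also have "(\<Sum>e\<in>pairs N. \<Sum>q\<in>injs m N. \<Sum>a\<in>{a\<in>E. q ` a = e}. \<bar>T q a X - T q a Y\<bar>)
      = (\<Sum>q\<in>injs m N. \<Sum>e\<in>pairs N. \<Sum>a\<in>{a\<in>E. q ` a = e}. \<bar>T q a X - T q a Y\<bar>)"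
    by (rule sum.swap)
  also have "\<dots> = (\<Sum>q\<in>injs m N. \<Sum>a\<in>E. \<bar>T q a X - T q a Y\<bar>)"
  proof (rule sum.cong[OF refl])
    fix q assume q: "q \<in> injs m N"
    show "(\<Sum>e\<in>pairs N. \<Sum>a\<in>{a\<in>E. q ` a = e}. \<bar>T q a X - T q a Y\<bar>) = (\<Sum>a\<in>E. \<bar>T q a X - T q a Y\<bar>)"
      by (rule sum.group[OF fin finite_pairs]) (use img_pairs[OF q] E in auto)
  qed
  also have "(\<Sum>q\<in>injs m N. \<Sum>a\<in>E. \<bar>T q a X - T q a Y\<bar>) \<le> (\<Sum>q\<in>injs m N. \<Sum>a\<in>E. \<Sum>b\<in>E-{a}. \<bar>D (q ` b)\<bar>)"
  proof (intro sum_mono)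
    fix q a assume q: "q \<in> injs m N" and a: "a \<in> E"
    show "\<bar>T q a X - T q a Y\<bar> \<le> (\<Sum>b\<in>E-{a}. \<bar>D (q ` b)\<bar>)"
      unfolding T_def D_def
      by (rule lemB[where x="\<lambda>b. X (q ` b)" and y="\<lambda>b. Y (q ` b)", simplified])
         (use fin X01 Y01 img_pairs[OF q] E in auto)
  qed
  also have "(\<Sum>q\<in>injs m N. \<Sum>a\<in>E. \<Sum>b\<in>E-{a}. \<bar>D (q ` b)\<bar>) = (\<Sum>a\<in>E. \<Sum>b\<in>E-{a}. \<Sum>q\<in>injs m N. \<bar>D (q ` b)\<bar>)"
  proof -
    have "(\<Sum>q\<in>injs m N. \<Sum>a\<in>E. \<Sum>b\<in>E-{a}. \<bar>D (q ` b)\<bar>) = (\<Sum>a\<in>E. \<Sum>q\<in>injs m N. \<Sum>b\<in>E-{a}. \<bar>D (q ` b)\<bar>)"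
      by (rule sum.swap)
    also have "\<dots> = (\<Sum>a\<in>E. \<Sum>b\<in>E-{a}. \<Sum>q\<in>injs m N. \<bar>D (q ` b)\<bar>)"
      by (rule sum.cong[OF refl], rule sum.swap)
    finally show ?thesis .
  qed
  finally have ineq: "(\<Sum>e\<in>pairs N. \<bar>dpartial (hom_density m E N) e X - dpartial (hom_density m E N) e Y\<bar>)
     \<le> (\<Sum>a\<in>E. \<Sum>b\<in>E-{a}. \<Sum>q\<in>injs m N. \<bar>D (q ` b)\<bar>) / (2 * P)"
    using P by (simp add: divide_right_mono)
  have "W * ((\<Sum>a\<in>E. \<Sum>b\<in>E-{a}. \<Sum>q\<in>injs m N. \<bar>D (q ` b)\<bar>) / (2 * P))
      = (\<Sum>a\<in>E. \<Sum>b\<in>E-{a}. W * (\<Sum>q\<in>injs m N. \<bar>D (q ` b)\<bar>) / (2 * P))"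
    by (simp add: sum_distrib_left sum_divide_distrib)
  also have "\<dots> = (\<Sum>a\<in>E. \<Sum>b\<in>E-{a}. l1norm N D)"
  proof (intro sum.cong refl)
    fix a b assume a: "a \<in> E" and b: "b \<in> E-{a}"
    have "b \<in> pairs m" using b E by auto
    from count_pairs[OF this mN, of "\<lambda>e. \<bar>D e\<bar>"]
    have "W * (\<Sum>q\<in>injs m N. \<bar>D (q ` b)\<bar>) = 2 * P * l1norm N D"
      unfolding W_def P_def l1norm_def .
    then show "W * (\<Sum>q\<in>injs m N. \<bar>D (q ` b)\<bar>) / (2 * P) = l1norm N D" using P by simp
  qed
  also have "\<dots> = real (card E) * (real (card E) - 1) * l1norm N D"
  proof -
    have "(\<Sum>a\<in>E. \<Sum>b\<in>E-{a}. l1norm N D) = (\<Sum>a\<in>E. (real (card E) - 1) * l1norm N D)"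
    proof (rule sum.cong[OF refl])
      fix a assume a: "a \<in> E"
      have "card (E - {a}) = card E - 1" using a fin by simp
      moreover have "card E \<ge> 1" using a fin by (metis One_nat_def Suc_leI card_gt_0_iff empty_iff)
      ultimately show "(\<Sum>b\<in>E-{a}. l1norm N D) = (real (card E) - 1) * l1norm N D" by simp
    qed
    then show ?thesis by simp
  qed
  finally have eq: "W * ((\<Sum>a\<in>E. \<Sum>b\<in>E-{a}. \<Sum>q\<in>injs m N. \<bar>D (q ` b)\<bar>) / (2 * P)) = real (card E) * (real (card E) - 1) * l1norm N D" .
  show ?thesis
    using mult_left_mono[OF ineq W] eq unfolding W_def D_def by simp
qed



theorem lemma31:
  fixes N L :: nat
    and v :: "nat \<Rightarrow> nat" and E :: "nat \<Rightarrow> nat set set" and \<beta> :: "nat \<Rightarrow> real"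
    and f :: "(nat set \<Rightarrow> real) \<Rightarrow> real"
    and X Y :: "nat set \<Rightarrow> real"
  assumes graphs: "\<And>i. i < L \<Longrightarrow> E i \<subseteq> pairs (v i)"
    and hf: "\<And>Z. f Z = real N * (real N - 1) * (\<Sum>i<L. \<beta> i * hom_density (v i) (E i) N Z)"
    and X01: "\<forall>e\<in>pairs N. 0 \<le> X e \<and> X e \<le> 1"
    and Y01: "\<forall>e\<in>pairs N. 0 \<le> Y e \<and> Y e \<le> 1"
  shows "l1norm N (\<lambda>e. dpartial f e X - dpartial f e Y)
    \<le> (\<Sum>i<L. \<bar>\<beta> i\<bar> * real (card (E i)) * (real (card (E i)) - 1)) * l1norm N (\<lambda>e. X e - Y e)"
proof -
  define W where "W = real N * (real N - 1)"
  have W: "0 \<le> W" unfolding W_def using cc_nonneg[of N] .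
  define d where "d = (\<lambda>i e Z. dpartial (hom_density (v i) (E i) N) e Z)"
  have df: "dpartial f e Z = W * (\<Sum>i<L. \<beta> i * d i e Z)" for e Z
  proof -
    define S where "S = (\<lambda>Z. \<Sum>i<L. \<beta> i * hom_density (v i) (E i) N Z)"
    have fS: "f Z' = W * S Z'" for Z' unfolding W_def S_def by (rule hf)
    have "dpartial f e Z = W * ((S (Z(e:=1)) - S (Z(e:=0))) / 2)"
      unfolding dpartial_def fS by (simp add: right_diff_distrib)
    also have "(S (Z(e:=1)) - S (Z(e:=0))) / 2 = (\<Sum>i<L. \<beta> i * d i e Z)"
      unfolding S_def d_def dpartial_def sum_subtractf[symmetric] sum_divide_distrib
      by (rule sum.cong[OF refl]) (simp add: right_diff_distrib)
    finally show ?thesis .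
  qed
  have "l1norm N (\<lambda>e. dpartial f e X - dpartial f e Y)
      = (\<Sum>e\<in>pairs N. \<bar>\<Sum>i<L. W * (\<beta> i * (d i e X - d i e Y))\<bar>)"
    unfolding l1norm_def df
    by (simp add: sum_subtractf[symmetric] sum_distrib_left right_diff_distrib)
  also have "\<dots> \<le> (\<Sum>e\<in>pairs N. \<Sum>i<L. \<bar>\<beta> i\<bar> * (W * \<bar>d i e X - d i e Y\<bar>))"
    by (intro sum_mono order_trans[OF sum_abs]) (simp add: abs_mult W)
  also have "\<dots> = (\<Sum>i<L. \<bar>\<beta> i\<bar> * (W * (\<Sum>e\<in>pairs N. \<bar>d i e X - d i e Y\<bar>)))"
    by (simp add: sum.swap[of _ "pairs N"] sum_distrib_left)
  also have "\<dots> \<le> (\<Sum>i<L. \<bar>\<beta> i\<bar> * (real (card (E i)) * (real (card (E i)) - 1) * l1norm N (\<lambda>e. X e - Y e)))"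
  proof (intro sum_mono mult_left_mono)
    fix i assume "i \<in> {..<L}"
    then show "W * (\<Sum>e\<in>pairs N. \<bar>d i e X - d i e Y\<bar>) \<le> real (card (E i)) * (real (card (E i)) - 1) * l1norm N (\<lambda>e. X e - Y e)"
      unfolding W_def d_def using key[OF graphs X01 Y01] by simp
  qed simp
  also have "\<dots> = (\<Sum>i<L. \<bar>\<beta> i\<bar> * real (card (E i)) * (real (card (E i)) - 1)) * l1norm N (\<lambda>e. X e - Y e)"
    by (simp add: sum_distrib_right mult.assoc)
  finally show ?thesis .
qed


end
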